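(* Let $X_1,X_2,\dots$ be i.i.d. integer-valued random variables. Then for every $n\ge1$, $$H_2\Big(\sum_{i=1}^n X_i\Big)\le H_2\Big(\sum_{i=1}^{n+1}X_i\Big).$$
   Context: For an integer-valued random variable $Z$, $H_2(Z)=-\log\sum_{z}\mathbf P\{Z=z\}^2$ is its Rényi entropy of order $2$ (collision entropy). *)

theory Defs
  imports "HOL-Probability.Probability"
begin

text \<open>Renyi entropy of order 2 (collision entropy) of an integer-valued random
variable Z on the probability space M; natural logarithm (the base is irrelevant
for the inequality).\<close>
definition collision_entropy :: "'a measure \<Rightarrow> ('a \<Rightarrow> int) \<Rightarrow> real" where
  "collision_entropy M Z = - ln (\<Sum>\<^sub>\<infinity>z\<in>(UNIV::int set). (measure M {x \<in> space M. Z x = z})\<^sup>2)"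

end

theory Submission
  imports Defs
begin

lemma infsum_nn_conv:
  fixes f :: "'b \<Rightarrow> real"
  assumes nn: "\<And>x. f x \<ge> 0"
  shows "infsum f UNIV = enn2real (\<integral>\<^sup>+x. ennreal (f x) \<partial>count_space UNIV)"
proof (cases "(\<integral>\<^sup>+x. ennreal (f x) \<partial>count_space UNIV) = \<infinity>")
  case True
  have "\<not> f summable_on UNIV"
  proof
    assume "f summable_on UNIV"
    then have "(\<lambda>x. norm (f x)) summable_on UNIV" using nn by simp
    then have "Infinite_Set_Sum.abs_summable_on f UNIV"
      using abs_summable_equivalent by blast
    then have "integrable (count_space UNIV) f" by (simp add: abs_summable_on_def)
    then have "(\<integral>\<^sup>+x. ennreal (norm (f x)) \<partial>count_space UNIV) < \<infinity>"
      by (simp add: integrable_iff_bounded)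
    then show False using True nn by simp
  qed
  then show ?thesis using True by (simp add: infsum_not_exists)
next
  case False
  have "integrable (count_space UNIV) f"
    using False nn by (simp add: integrable_iff_bounded top.not_eq_extremum)
  then have "Infinite_Set_Sum.abs_summable_on f UNIV" by (simp add: abs_summable_on_def)
  then have "infsum f UNIV = infsetsum f UNIV" by (simp add: infsetsum_infsum)
  also have "\<dots> = enn2real (\<integral>\<^sup>+x. ennreal (f x) \<partial>count_space UNIV)"
    using False nn by (simp add: infsetsum_conv_nn_integral)
  finally show ?thesis .
qed


lemma meas_add_int:
  fixes f g :: "'b \<Rightarrow> int"
  assumes f: "f \<in> measurable N (count_space UNIV)" and g: "g \<in> measurable N (count_space UNIV)"
  shows "(\<lambda>x. f x + g x) \<in> measurable N (count_space UNIV)"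
proof -
  have "(\<lambda>x. (\<lambda>a x. a + g x) (f x) x) \<in> measurable N (count_space UNIV)"
  proof (rule measurable_compose_countable[OF _ f])
    fix a :: int
    show "(\<lambda>x. a + g x) \<in> measurable N (count_space UNIV)"
      using measurable_compose[OF g measurable_count_space[of "(+) a" UNIV]] by simp
  qed
  then show ?thesis by simp
qed

lemma meas_sum_int:
  fixes g :: "'i \<Rightarrow> 'b \<Rightarrow> int"
  assumes "finite I" "\<And>i. i \<in> I \<Longrightarrow> g i \<in> measurable N (count_space UNIV)"
  shows "(\<lambda>x. \<Sum>i\<in>I. g i x) \<in> measurable N (count_space UNIV)"
  using assms
proof (induction I rule: finite_induct)
  case empty
  then show ?case by simp
next
  case (insert i I)
  then show ?case by (simp add: meas_add_int)
qed

context prob_space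
begin

abbreviation PZ :: "('a \<Rightarrow> int) \<Rightarrow> int \<Rightarrow> ennreal" where
  "PZ Z z \<equiv> emeasure M {x\<in>space M. Z x = z}"

lemma PZ_sets:
  assumes "Z \<in> measurable M (count_space UNIV)"
  shows "{x\<in>space M. Z x = z} \<in> sets M"
  using assms by measurable

lemma PZ_conv:
  fixes Z :: "'a \<Rightarrow> int"
  assumes Z: "Z \<in> measurable M (count_space UNIV)"
  shows "(\<integral>\<^sup>+\<omega>. a (Z \<omega>) \<partial>M) = (\<integral>\<^sup>+y. a y * PZ Z y \<partial>count_space UNIV)"
proof -
  have "(\<integral>\<^sup>+\<omega>. a (Z \<omega>) \<partial>M)
      = (\<integral>\<^sup>+\<omega>. (\<integral>\<^sup>+y. a y * indicator {x\<in>space M. Z x = y} \<omega> \<partial>count_space UNIV) \<partial>M)"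
  proof (rule nn_integral_cong)
    fix \<omega> assume w: "\<omega> \<in> space M"
    have "(\<integral>\<^sup>+y. a y * indicator {x\<in>space M. Z x = y} \<omega> \<partial>count_space UNIV)
        = (\<integral>\<^sup>+y. a y * indicator {Z \<omega>} y \<partial>count_space UNIV)"
      using w by (intro nn_integral_cong) (auto split: split_indicator)
    also have "\<dots> = a (Z \<omega>)" by simp
    finally show "a (Z \<omega>) = (\<integral>\<^sup>+y. a y * indicator {x\<in>space M. Z x = y} \<omega> \<partial>count_space UNIV)" by simp
  qed
  also have "\<dots> = (\<integral>\<^sup>+y. (\<integral>\<^sup>+\<omega>. a y * indicator {x\<in>space M. Z x = y} \<omega> \<partial>M) \<partial>count_space UNIV)"
    using Z by (intro nn_integral_count_space_nn_integral) measurable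
  also have "\<dots> = (\<integral>\<^sup>+y. a y * PZ Z y \<partial>count_space UNIV)"
    by (intro nn_integral_cong nn_integral_cmult_indicator PZ_sets[OF Z])
  finally show ?thesis .
qed

lemma PZ_total:
  fixes Z :: "'a \<Rightarrow> int"
  assumes Z: "Z \<in> measurable M (count_space UNIV)"
  shows "(\<integral>\<^sup>+y. PZ Z y \<partial>count_space UNIV) = 1"
  using PZ_conv[OF Z, of "\<lambda>_. 1"] by (simp add: emeasure_space_1)

lemma PZ_indep:
  fixes S Y :: "'a \<Rightarrow> int"
  assumes ind: "indep_var (count_space UNIV) S (count_space UNIV) Y"
  shows "emeasure M {x\<in>space M. S x = a \<and> Y x = b} = PZ S a * PZ Y b"
proof -
  have "prob ((\<lambda>x. (S x, Y x)) -` ({a} \<times> {b}) \<inter> space M) =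
    prob (S -` {a} \<inter> space M) * prob (Y -` {b} \<inter> space M)"
    by (rule indep_varD[OF ind]) auto
  moreover have "(\<lambda>x. (S x, Y x)) -` ({a} \<times> {b}) \<inter> space M = {x\<in>space M. S x = a \<and> Y x = b}" by auto
  moreover have "S -` {a} \<inter> space M = {x\<in>space M. S x = a}" by auto
  moreover have "Y -` {b} \<inter> space M = {x\<in>space M. Y x = b}" by auto
  ultimately show ?thesis
    by (simp add: emeasure_eq_measure ennreal_mult)
qed

lemma PZ_sum:
  fixes S Y :: "'a \<Rightarrow> int"
  assumes ind: "indep_var (count_space UNIV) S (count_space UNIV) Y"
    and S: "S \<in> measurable M (count_space UNIV)" and Y: "Y \<in> measurable M (count_space UNIV)"
  shows "PZ (\<lambda>x. S x + Y x) z = (\<integral>\<^sup>+y. PZ S (z - y) * PZ Y y \<partial>count_space UNIV)"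
proof -
  have sets_SY: "{x\<in>space M. S x = a \<and> Y x = b} \<in> sets M" for a b
  proof -
    have "{x\<in>space M. S x = a \<and> Y x = b} = {x\<in>space M. S x = a} \<inter> {x\<in>space M. Y x = b}" by auto
    then show ?thesis using PZ_sets[OF S] PZ_sets[OF Y] by auto
  qed
  have "PZ (\<lambda>x. S x + Y x) z = (\<integral>\<^sup>+\<omega>. indicator {x\<in>space M. S x + Y x = z} \<omega> \<partial>M)"
    using S Y by (intro nn_integral_indicator[symmetric]) measurable
  also have "\<dots> = (\<integral>\<^sup>+\<omega>. (\<integral>\<^sup>+y. indicator {x\<in>space M. S x = z - y \<and> Y x = y} \<omega> \<partial>count_space UNIV) \<partial>M)"
  proof (rule nn_integral_cong)
    fix \<omega> assume w: "\<omega> \<in> space M"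
    have "(\<integral>\<^sup>+y. indicator {x\<in>space M. S x = z - y \<and> Y x = y} \<omega> \<partial>count_space UNIV)
        = (\<integral>\<^sup>+y. indicator {x\<in>space M. S x + Y x = z} \<omega> * indicator {Y \<omega>} y \<partial>count_space UNIV)"
      using w by (intro nn_integral_cong) (auto split: split_indicator)
    also have "\<dots> = indicator {x\<in>space M. S x + Y x = z} \<omega>"
      by (simp add: nn_integral_cmult_indicator)
    finally show "indicator {x\<in>space M. S x + Y x = z} \<omega> = (\<integral>\<^sup>+y. indicator {x\<in>space M. S x = z - y \<and> Y x = y} \<omega> \<partial>count_space UNIV)" by simp
  qed
  also have "\<dots> = (\<integral>\<^sup>+y. (\<integral>\<^sup>+\<omega>. indicator {x\<in>space M. S x = z - y \<and> Y x = y} \<omega> \<partial>M) \<partial>count_space UNIV)"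
    by (intro nn_integral_count_space_nn_integral borel_measurable_indicator sets_SY) auto
  also have "\<dots> = (\<integral>\<^sup>+y. PZ S (z - y) * PZ Y y \<partial>count_space UNIV)"
  proof (rule nn_integral_cong)
    fix y
    have "(\<integral>\<^sup>+\<omega>. indicator {x\<in>space M. S x = z - y \<and> Y x = y} \<omega> \<partial>M) = emeasure M {x\<in>space M. S x = z - y \<and> Y x = y}"
      using sets_SY by (intro nn_integral_indicator) auto
    then show "(\<integral>\<^sup>+\<omega>. indicator {x\<in>space M. S x = z - y \<and> Y x = y} \<omega> \<partial>M) = PZ S (z - y) * PZ Y y"
      using PZ_indep[OF ind] by simp
  qed
  finally show ?thesis .
qed

definition col :: "('a \<Rightarrow> int) \<Rightarrow> ennreal" where
  "col Z = (\<integral>\<^sup>+z. (PZ Z z)^2 \<partial>count_space UNIV)"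

lemma col_le_1:
  fixes Z :: "'a \<Rightarrow> int"
  assumes Z: "Z \<in> measurable M (count_space UNIV)"
  shows "col Z \<le> 1"
proof -
  have "col Z \<le> (\<integral>\<^sup>+z. PZ Z z \<partial>count_space UNIV)"
    unfolding col_def
  proof (intro nn_integral_mono)
    fix z
    have "PZ Z z \<le> 1" by (rule emeasure_le_1)
    then have "PZ Z z * PZ Z z \<le> PZ Z z * 1" by (intro mult_left_mono) auto
    then show "(PZ Z z)^2 \<le> PZ Z z" by (simp add: power2_eq_square)
  qed
  then show ?thesis using PZ_total[OF Z] by simp
qed

lemma col_pos:
  fixes Z :: "'a \<Rightarrow> int"
  assumes Z: "Z \<in> measurable M (count_space UNIV)"
  shows "col Z > 0"
proof (rule ccontr)
  assume "\<not> col Z > 0"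
  then have "col Z = 0" by simp
  then have "AE z in count_space UNIV. (PZ Z z)^2 = 0"
    unfolding col_def by (subst (asm) nn_integral_0_iff_AE) auto
  then have "\<And>z. PZ Z z = 0" by (simp add: AE_count_space)
  then show False using PZ_total[OF Z] by simp
qed

lemma col_mono:
  fixes S Y :: "'a \<Rightarrow> int"
  assumes ind: "indep_var (count_space UNIV) S (count_space UNIV) Y"
    and S: "S \<in> measurable M (count_space UNIV)" and Y: "Y \<in> measurable M (count_space UNIV)"
  shows "col (\<lambda>x. S x + Y x) \<le> col S"
proof -
  have g: "(\<lambda>\<omega>. f (Y \<omega>)) \<in> borel_measurable M" for f :: "int \<Rightarrow> ennreal"
    using measurable_compose[OF Y, of f borel] by simp
  have eq: "PZ (\<lambda>x. S x + Y x) z = (\<integral>\<^sup>+\<omega>. PZ S (z - Y \<omega>) \<partial>M)" for z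
    using PZ_sum[OF ind S Y, of z] PZ_conv[OF Y, of "\<lambda>y. PZ S (z - y)"] by simp
  have cs: "(PZ (\<lambda>x. S x + Y x) z)^2 \<le> (\<integral>\<^sup>+\<omega>. (PZ S (z - Y \<omega>))^2 \<partial>M)" for z
  proof -
    have "(\<integral>\<^sup>+\<omega>. PZ S (z - Y \<omega>) * 1 \<partial>M)\<^sup>2 \<le> (\<integral>\<^sup>+\<omega>. (PZ S (z - Y \<omega>))^2 \<partial>M) * (\<integral>\<^sup>+\<omega>. 1 ^ 2 \<partial>M)"
      by (rule Cauchy_Schwarz_nn_integral) (auto intro: g)
    then show ?thesis using eq[of z] by (simp add: emeasure_space_1)
  qed
  have "col (\<lambda>x. S x + Y x) \<le> (\<integral>\<^sup>+z. (\<integral>\<^sup>+\<omega>. (PZ S (z - Y \<omega>))^2 \<partial>M) \<partial>count_space UNIV)"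
    unfolding col_def by (intro nn_integral_mono cs)
  also have "\<dots> = (\<integral>\<^sup>+\<omega>. (\<integral>\<^sup>+z. (PZ S (z - Y \<omega>))^2 \<partial>count_space UNIV) \<partial>M)"
    by (rule nn_integral_count_space_nn_integral[symmetric]) (auto intro: g)
  also have "\<dots> = (\<integral>\<^sup>+\<omega>. col S \<partial>M)"
  proof (rule nn_integral_cong)
    fix \<omega>
    have "bij_betw (\<lambda>z. z - Y \<omega>) UNIV UNIV"
      by (rule bij_betwI[where g="\<lambda>z. z + Y \<omega>"]) auto
    then show "(\<integral>\<^sup>+z. (PZ S (z - Y \<omega>))^2 \<partial>count_space UNIV) = col S"
      unfolding col_def by (rule nn_integral_bij_count_space[where f="\<lambda>z. (PZ S z)^2"])
  qed
  also have "\<dots> = col S" by (simp add: emeasure_space_1)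
  finally show ?thesis .
qed

end


lemma (in prob_space) entropy_col:
  fixes Z :: "'a \<Rightarrow> int"
  shows "collision_entropy M Z = - ln (enn2real (col Z))"
proof -
  have "(\<Sum>\<^sub>\<infinity>z\<in>(UNIV::int set). (measure M {x \<in> space M. Z x = z})\<^sup>2)
      = enn2real (\<integral>\<^sup>+z. ennreal ((measure M {x \<in> space M. Z x = z})\<^sup>2) \<partial>count_space UNIV)"
    by (rule infsum_nn_conv) simp
  also have "(\<integral>\<^sup>+z. ennreal ((measure M {x \<in> space M. Z x = z})\<^sup>2) \<partial>count_space UNIV) = col Z"
    unfolding col_def by (simp add: emeasure_eq_measure ennreal_power)
  finally show ?thesis unfolding collision_entropy_def by simp
qed

theorem lemma5:
  fixes M :: "'a measure" and X :: "nat \<Rightarrow> 'a \<Rightarrow> int" and n :: nat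
  assumes "prob_space M"
    and "prob_space.indep_vars M (\<lambda>_. count_space UNIV) X {1..}"
    and "\<And>i. i \<ge> 1 \<Longrightarrow> distr M (count_space UNIV) (X i) = distr M (count_space UNIV) (X 1)"
    and "n \<ge> 1"
  shows "collision_entropy M (\<lambda>\<omega>. \<Sum>i=1..n. X i \<omega>)
           \<le> collision_entropy M (\<lambda>\<omega>. \<Sum>i=1..n+1. X i \<omega>)"
proof -
  interpret prob_space M by fact
  have ind: "indep_vars (\<lambda>_. count_space UNIV) X {1..}" by fact
  have Xm: "X i \<in> measurable M (count_space UNIV)" if "i \<ge> 1" for i
    using ind that unfolding indep_vars_def by auto
  define S where "S = (\<lambda>\<omega>. \<Sum>i=1..n. X i \<omega>)"
  define Y where "Y = X (n+1)"
  have Sm: "S \<in> measurable M (count_space UNIV)"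
    unfolding S_def by (intro meas_sum_int) (auto intro: Xm)
  have Ym: "Y \<in> measurable M (count_space UNIV)" unfolding Y_def by (rule Xm) simp
  have r: "indep_var (PiM {1..n} (\<lambda>_. count_space UNIV)) (\<lambda>\<omega>. restrict (\<lambda>i. X i \<omega>) {1..n})
                     (PiM {n+1} (\<lambda>_. count_space UNIV)) (\<lambda>\<omega>. restrict (\<lambda>i. X i \<omega>) {n+1})"
    by (rule indep_var_restrict[OF ind]) auto
  have m1: "(\<lambda>f. \<Sum>i\<in>{1..n}. f i) \<in> measurable (PiM {1..n} (\<lambda>_. count_space UNIV)) (count_space (UNIV::int set))"
    by (intro meas_sum_int) auto
  have m2: "(\<lambda>f. f (n+1)) \<in> measurable (PiM {n+1} (\<lambda>_. count_space UNIV)) (count_space (UNIV::int set))"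
    by (rule measurable_component_singleton) simp
  have "indep_var (count_space UNIV) ((\<lambda>f. \<Sum>i\<in>{1..n}. f i) \<circ> (\<lambda>\<omega>. restrict (\<lambda>i. X i \<omega>) {1..n}))
                  (count_space UNIV) ((\<lambda>f. f (n+1)) \<circ> (\<lambda>\<omega>. restrict (\<lambda>i. X i \<omega>) {n+1}))"
    by (rule indep_var_compose[OF r m1 m2])
  moreover have "((\<lambda>f. \<Sum>i\<in>{1..n}. f i) \<circ> (\<lambda>\<omega>. restrict (\<lambda>i. X i \<omega>) {1..n})) = S"
    unfolding S_def by (auto simp: fun_eq_iff intro!: sum.cong)
  moreover have "((\<lambda>f. f (n+1)) \<circ> (\<lambda>\<omega>. restrict (\<lambda>i. X i \<omega>) {n+1})) = Y"
    unfolding Y_def by (auto simp: fun_eq_iff)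
  ultimately have iSY: "indep_var (count_space UNIV) S (count_space UNIV) Y" by simp
  have T: "(\<lambda>\<omega>. \<Sum>i=1..n+1. X i \<omega>) = (\<lambda>x. S x + Y x)"
    unfolding S_def Y_def by (auto simp: fun_eq_iff)
  have Tm: "(\<lambda>x. S x + Y x) \<in> measurable M (count_space UNIV)"
    using Sm Ym by (rule meas_add_int)
  have le: "col (\<lambda>x. S x + Y x) \<le> col S" by (rule col_mono[OF iSY Sm Ym])
  have pos: "col (\<lambda>x. S x + Y x) > 0" by (rule col_pos[OF Tm])
  have fin: "col S \<le> 1" by (rule col_le_1[OF Sm])
  have "enn2real (col (\<lambda>x. S x + Y x)) \<le> enn2real (col S)"
    using le fin by (intro enn2real_mono) (auto simp: top.not_eq_extremum intro: le_less_trans)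
  moreover have "enn2real (col (\<lambda>x. S x + Y x)) > 0"
    using pos le fin by (auto simp: enn2real_positive_iff top.not_eq_extremum intro: le_less_trans order.trans)
  ultimately have "ln (enn2real (col (\<lambda>x. S x + Y x))) \<le> ln (enn2real (col S))" by simp
  then show ?thesis unfolding T entropy_col S_def[symmetric] by simp
qed

end
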